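(* Let $H\ge S\ge1$ and let $\{\boldsymbol{d}_{\theta s}\}$, $\theta=1,\ldots,H$, $s=1,\ldots,S$, be random variables that are jointly absolutely continuous with respect to Lebesgue measure on $\mathbb{R}_+^{H\times S}$; write $\boldsymbol{D}=[\boldsymbol{d}_{\theta s}]$. Let $k$ be a receiving agent with (deterministic) aggregate weight vector $x_k=[x_{1k},\ldots,x_{Sk}]^\top$ (entries strictly positive, summing to $1$). Let $\boldsymbol{\theta}^\star_k=\arg\min_{\theta\in\{1,\ldots,H\}}\sum_{s=1}^S x_{sk}\boldsymbol{d}_{\theta s}$, and when it is unique define $\boldsymbol{B}_k=(\mathbb{1}_He_{\boldsymbol{\theta}^\star_k}^\top-I_H)\boldsymbol{D}$ and $\boldsymbol{C}_k=\begin{bmatrix}\boldsymbol{B}_k\\ \mathbb{1}_S^\top\end{bmatrix}$. Then $$\mathbb{P}\big[\boldsymbol{\theta}^\star_k\text{ is unique and }\mathrm{rank}(\boldsymbol{C}_k)=S\big]=1.$$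
   Context: Setting: a weakly-connected network with $S$ sending sub-networks $\mathcal{N}_1,\ldots,\mathcal{N}_S$, in each of which all agents share the same true distribution $f^{(s)}$ and likelihoods $L^{(s)}(\theta)$, $\theta\in\{1,\ldots,H\}$; $\boldsymbol{d}_{\theta s}$ models the KL divergence $D[f^{(s)}\|L^{(s)}(\theta)]$. The combination matrix $A$ (nonnegative, left-stochastic) has block form $\begin{bmatrix}A_{\mathcal{S}}&A_{\mathcal{S}\mathcal{R}}\\0&A_{\mathcal{R}}\end{bmatrix}$ with $A_{\mathcal{S}}=\mathrm{blockdiag}\{A_{\mathcal{N}_s}\}$, each sending sub-network strongly connected with Perron vector $p^{(s)}$, each receiving sub-network connected and linked to at least one agent of every sending sub-network. With $E=\mathrm{blockdiag}\{p^{(s)}\mathbb{1}^\top_{N_s}\}$ and $\Omega=[\omega_{\ell k}]=EA_{\mathcal{S}\mathcal{R}}(I-A_{\mathcal{R}})^{-1}$, the aggregate weight is $x_{sk}=\sum_{\ell\in\mathcal{N}_s}\omega_{\ell k}$. $e_m$ is the $m$-th canonical basis vector of $\mathbb{R}^H$ and $\mathbb{1}_L$ the all-ones vector. *)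

theory Defs
  imports "HOL-Analysis.Analysis" "HOL-Probability.Probability"
begin

text \<open>Matrices D = [d_{theta s}] are rendered as real^'s^'h : rows indexed by
  hypotheses theta (finite type 'h, H = CARD('h)), columns by sending
  sub-networks s (finite type 's, S = CARD('s)).\<close>

definition agg_cost :: "('s::finite \<Rightarrow> real) \<Rightarrow> real^'s^'h \<Rightarrow> 'h \<Rightarrow> real" where
  "agg_cost x D \<theta> = (\<Sum>s\<in>UNIV. x s * D $ \<theta> $ s)"

definition argmin_unique :: "('h \<Rightarrow> real) \<Rightarrow> bool" where
  "argmin_unique f \<longleftrightarrow> (\<exists>!\<theta>. \<forall>\<theta>'. f \<theta> \<le> f \<theta>')"

definition argmin_of :: "('h \<Rightarrow> real) \<Rightarrow> 'h" where
  "argmin_of f = (THE \<theta>. \<forall>\<theta>'. f \<theta> \<le> f \<theta>')"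

definition Bmat :: "real^'s^'h \<Rightarrow> 'h \<Rightarrow> real^'s^'h" where
  "Bmat D t = (\<chi> \<theta> s. D $ t $ s - D $ \<theta> $ s)"

text \<open>C = [B; 1_S^T], an (H+1) x S matrix; the extra row is indexed by Inr ().\<close>
definition Cmat :: "real^'s^'h \<Rightarrow> 'h \<Rightarrow> real^'s^('h + unit)" where
  "Cmat D t = (\<chi> r. case r of Inl \<theta> \<Rightarrow> Bmat D t $ \<theta> | Inr _ \<Rightarrow> (\<chi> s. 1))"

end

theory Submission
  imports Defs
begin

definition badset :: "(real^'s::finite^'h::finite) set" where
  "badset = {Z. \<exists>v::real^'s. v \<noteq> 0 \<and> sum (($) v) UNIV = 0 \<and> (\<forall>\<theta> \<theta>'. Z$\<theta> \<bullet> v = Z$\<theta>' \<bullet> v)}"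

lemma Cmat_mult:
  fixes Z :: "real^'s::finite^'h::finite"
  shows "Cmat Z t *v v = 0 \<longleftrightarrow> sum (($) v) UNIV = 0 \<and> (\<forall>\<theta>. Z$t \<bullet> v = Z$\<theta> \<bullet> v)"
proof -
  have a: "(Cmat Z t *v v) $ Inl \<theta> = Z$t \<bullet> v - Z$\<theta> \<bullet> v" for \<theta>
    by (simp add: Cmat_def Bmat_def matrix_vector_mult_def inner_vec_def left_diff_distrib sum_subtractf)
  have b: "(Cmat Z t *v v) $ Inr u = sum (($) v) UNIV" for u
    by (simp add: Cmat_def matrix_vector_mult_def)
  show ?thesis
  proof
    assume h: "Cmat Z t *v v = 0"
    show "sum (($) v) UNIV = 0 \<and> (\<forall>\<theta>. Z$t \<bullet> v = Z$\<theta> \<bullet> v)"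
    proof
      show "sum (($) v) UNIV = 0" using h[THEN arg_cong[where f="\<lambda>w. w $ Inr ()"]] by (simp add: b)
      show "\<forall>\<theta>. Z$t \<bullet> v = Z$\<theta> \<bullet> v"
      proof
        fix \<theta> show "Z$t \<bullet> v = Z$\<theta> \<bullet> v"
          using h[THEN arg_cong[where f="\<lambda>w. w $ Inl \<theta>"]] by (simp add: a)
      qed
    qed
  next
    assume h: "sum (($) v) UNIV = 0 \<and> (\<forall>\<theta>. Z$t \<bullet> v = Z$\<theta> \<bullet> v)"
    show "Cmat Z t *v v = 0"
      unfolding vec_eq_iff
    proof
      fix i show "(Cmat Z t *v v) $ i = 0 $ i"
        using h by (cases i) (auto simp: a b)
    qed
  qed
qed

lemma rank_Cmat:
  fixes Z :: "real^'s::finite^'h::finite"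
  shows "rank (Cmat Z t) = CARD('s) \<longleftrightarrow> Z \<notin> badset"
proof -
  have "inj ((*v) (Cmat Z t)) \<longleftrightarrow> (\<forall>v. Cmat Z t *v v = 0 \<longrightarrow> v = 0)"
    using linear_injective_0[OF matrix_vector_mul_linear[of "Cmat Z t"]] by simp
  also have "\<dots> \<longleftrightarrow> Z \<notin> badset"
  proof
    assume h: "\<forall>v. Cmat Z t *v v = 0 \<longrightarrow> v = 0"
    show "Z \<notin> badset"
    proof
      assume "Z \<in> badset"
      then obtain v where v0: "v \<noteq> 0" and vs: "sum (($) v) UNIV = 0"
        and ve: "\<forall>\<theta> \<theta>'. Z$\<theta> \<bullet> v = Z$\<theta>' \<bullet> v" unfolding badset_def by blast
      have "Cmat Z t *v v = 0" unfolding Cmat_mult using vs ve by blast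
      then show False using h v0 by blast
    qed
  next
    assume nb: "Z \<notin> badset"
    show "\<forall>v. Cmat Z t *v v = 0 \<longrightarrow> v = 0"
    proof (intro allI impI)
      fix v assume "Cmat Z t *v v = 0"
      then have vs: "sum (($) v) UNIV = 0" and ve: "\<forall>\<theta>. Z$t \<bullet> v = Z$\<theta> \<bullet> v"
        unfolding Cmat_mult by blast+
      have "\<forall>\<theta> \<theta>'. Z$\<theta> \<bullet> v = Z$\<theta>' \<bullet> v" using ve by metis
      then show "v = 0" using nb vs unfolding badset_def by blast
    qed
  qed
  finally show ?thesis by (simp add: full_rank_injective)
qed

lemma diff_comp:
  "(\<lambda>W::real^'s::finite^'h::finite. W$i$j) differentiable (at x)"
proof -
  have "bounded_linear (\<lambda>W::real^'s::finite^'h::finite. W$i$j)"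
    by (rule bounded_linear_compose[OF bounded_linear_vec_nth bounded_linear_vec_nth])
  then show ?thesis by (rule bounded_linear_imp_differentiable)
qed

lemma diff_sumU:
  assumes "\<And>a. (\<lambda>x. f a x) differentiable net"
  shows "(\<lambda>x. \<Sum>a\<in>(UNIV::'a::finite set). f a x) differentiable net"
  using differentiable_sum[of "UNIV::'a set" f net] assms by simp

lemma diff_chi:
  assumes "\<And>\<theta> s. (\<lambda>W. f W \<theta> s) differentiable (at x)"
  shows "(\<lambda>W. (\<chi> \<theta> s. f W \<theta> s) :: real^'s::finite^'h::finite) differentiable (at x)"
proof -
  have eq: "(\<lambda>W. (\<chi> \<theta> s. f W \<theta> s) :: real^'s::finite^'h::finite) =
     (\<lambda>W. \<Sum>\<theta>\<in>UNIV. \<Sum>s\<in>UNIV. f W \<theta> s *\<^sub>R axis \<theta> (axis s 1))"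
  proof (rule ext)
    fix W
    have comp: "(c *\<^sub>R axis \<theta> (axis s (1::real)))$i$j = (if s = j then (if \<theta> = i then c else 0) else 0)" for \<theta> s i j c
      by (simp add: axis_def)
    have "(\<Sum>\<theta>\<in>UNIV. \<Sum>s\<in>UNIV. f W \<theta> s *\<^sub>R axis \<theta> (axis s 1))$i$j = f W i j" for i j
    proof -
      have "(\<Sum>\<theta>\<in>UNIV. \<Sum>s\<in>UNIV. f W \<theta> s *\<^sub>R axis \<theta> (axis s (1::real)))$i$j
          = (\<Sum>\<theta>\<in>UNIV. \<Sum>s\<in>UNIV. (f W \<theta> s *\<^sub>R axis \<theta> (axis s (1::real)))$i$j)"
        by (simp only: sum_component)
      also have "\<dots> = (\<Sum>\<theta>\<in>UNIV. \<Sum>s\<in>UNIV. if s = j then (if \<theta> = i then f W \<theta> s else 0) else 0)"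
        by (simp only: comp)
      also have "\<dots> = f W i j" by simp
      finally show ?thesis .
    qed
    then show "(\<chi> \<theta> s. f W \<theta> s) = (\<Sum>\<theta>\<in>UNIV. \<Sum>s\<in>UNIV. f W \<theta> s *\<^sub>R axis \<theta> (axis s 1))"
      by (simp add: vec_eq_iff del: vector_scaleR_component)
  qed
  show ?thesis unfolding eq
    apply (rule diff_sumU)
    apply (rule diff_sumU)
    apply (rule differentiable_scaleR[OF assms differentiable_const])
    done
qed

definition vv :: "'s \<Rightarrow> 's \<Rightarrow> ('s \<Rightarrow> 'h) \<Rightarrow> real^'s::finite^'h::finite \<Rightarrow> 's \<Rightarrow> real" where
  "vv s1 s2 g W s = (if s = s1 then 1 else if s = s2 then -1 - (\<Sum>s'\<in>-{s1,s2}. W$(g s')$s1) else W$(g s)$s1)"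

definition FF :: "'s \<Rightarrow> 's \<Rightarrow> ('s \<Rightarrow> 'h) \<Rightarrow> real^'s::finite^'h::finite \<Rightarrow> real^'s^'h" where
  "FF s1 s2 g W = (\<chi> \<theta> s. if s = s1 then W$(g s1)$s1 - (\<Sum>s'\<in>-{s1}. W$\<theta>$s' * vv s1 s2 g W s') else W$\<theta>$s)"

lemma diff_sum_gen:
  assumes "finite A" "\<And>a. a \<in> A \<Longrightarrow> (\<lambda>x. f a x) differentiable net"
  shows "(\<lambda>x. \<Sum>a\<in>A. f a x) differentiable net"
  using differentiable_sum[of A f net] assms by blast

lemma diff_if:
  assumes "f differentiable net" "g differentiable net"
  shows "(\<lambda>W. if c then f W else g W) differentiable net"
  using assms by (cases c) simp_all

lemma vv_diff: "(\<lambda>W. vv s1 s2 g W s) differentiable (at x)"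
  unfolding vv_def
  apply (rule diff_if)
   apply (rule differentiable_const)
  apply (rule diff_if)
   apply (rule differentiable_diff)
    apply (rule differentiable_const)
   apply (rule diff_sum_gen)
    apply simp
   apply (rule diff_comp)
  apply (rule diff_comp)
  done

lemma FF_diff: "FF s1 s2 g differentiable_on UNIV"
  unfolding differentiable_on_def FF_def
proof (intro ballI diff_chi)
  fix x :: "real^'a^'b" and \<theta> s
  show "(\<lambda>W. if s = s1 then W$(g s1)$s1 - (\<Sum>s'\<in>-{s1}. W$\<theta>$s' * vv s1 s2 g W s') else W$\<theta>$s) differentiable (at x within UNIV)"
    apply (rule diff_if)
     apply (rule differentiable_diff)
      apply (rule diff_comp)
     apply (rule diff_sum_gen)
      apply simp
     apply (rule differentiable_mult)
      apply (rule diff_comp)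
     apply (rule vv_diff)
    apply (rule diff_comp)
    done
qed

lemma hyp_negl: "negligible {W::real^'s::finite^'h::finite. W$i$j = 0}"
proof -
  have "{W::real^'s::finite^'h::finite. W$i$j = 0} = {W. axis i (axis j 1) \<bullet> W = 0}"
    by (simp add: inner_axis' inner_axis)
  moreover have "axis i (axis j (1::real)) \<noteq> 0"
    by (simp add: axis_eq_0_iff)
  ultimately show ?thesis using negligible_hyperplane[of "axis i (axis j (1::real))" 0] by simp
qed

lemma bad_cover:
  fixes g :: "'s::finite \<Rightarrow> 'h::finite" assumes "inj g"
  shows "(badset :: (real^'s^'h) set) \<subseteq> (\<Union>s1. \<Union>s2\<in>-{s1}. FF s1 s2 g ` {W. W$(g s2)$s1 = 0})"
proof
  fix Z :: "real^'s^'h" assume "Z \<in> badset"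
  then obtain v where v0: "v \<noteq> 0" and vs: "sum (($) v) UNIV = 0"
    and ve: "\<forall>\<theta> \<theta>'. Z$\<theta> \<bullet> v = Z$\<theta>' \<bullet> v" by (auto simp: badset_def)
  obtain s1 where vs1: "v$s1 \<noteq> 0" using v0 by (metis vec_eq_iff zero_index)
  define w where "w = (1 / v$s1) *\<^sub>R v"
  have w1: "w$s1 = 1" using vs1 by (simp add: w_def)
  have ws: "sum (($) w) UNIV = 0" using vs by (simp add: w_def sum_divide_distrib[symmetric])
  have we: "Z$\<theta> \<bullet> w = Z$\<theta>' \<bullet> w" for \<theta> \<theta>' using ve by (simp add: w_def)
  obtain s2 where s21: "s2 \<noteq> s1"
  proof -
    have "UNIV \<noteq> {s1}"
    proof
      assume u: "UNIV = {s1}"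
      have "sum (($) w) UNIV = w$s1" by (subst u) simp
      with ws w1 show False by simp
    qed
    then show ?thesis using that by blast
  qed
  define c where "c = Z$(g s1) \<bullet> w"
  define W where "W = (\<chi> \<theta> s. if s = s1 then (if \<theta> = g s1 then c else if \<theta> \<in> g ` (-{s1,s2}) then w $ inv g \<theta> else 0) else Z$\<theta>$s)"
  have W0: "W$(g s2)$s1 = 0" using assms s21 by (auto simp: W_def inj_eq)
  have Wv: "W$(g s)$s1 = w$s" if "s \<noteq> s1" "s \<noteq> s2" for s
    using that assms by (auto simp: W_def inj_eq)
  have split: "sum (($) w) UNIV = w$s1 + w$s2 + (\<Sum>s'\<in>-{s1,s2}. w$s')"
  proof -
    have u: "{s1,s2} \<union> -{s1,s2} = UNIV" by blast
    have "sum (($) w) UNIV = sum (($) w) {s1,s2} + sum (($) w) (-{s1,s2})"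
      using sum.union_disjoint[of "{s1,s2}" "-{s1,s2}" "($) w"] u by simp
    then show ?thesis using s21 by simp
  qed
  have vvW: "vv s1 s2 g W s = w$s" for s
  proof -
    have "(\<Sum>s'\<in>-{s1,s2}. W$(g s')$s1) = (\<Sum>s'\<in>-{s1,s2}. w$s')" by (rule sum.cong) (auto simp: Wv)
    then show ?thesis using split ws w1 Wv by (auto simp: vv_def)
  qed
  have Wc: "W$(g s1)$s1 = c" by (simp add: W_def)
  have cth: "c = Z$\<theta> \<bullet> w" for \<theta> using we c_def by simp
  have inner_split: "Z$\<theta> \<bullet> w = Z$\<theta>$s1 + (\<Sum>s'\<in>-{s1}. Z$\<theta>$s' * w$s')" for \<theta>
    using sum.remove[of UNIV s1 "\<lambda>s. Z$\<theta>$s * w$s"] w1 by (simp add: inner_vec_def Compl_eq_Diff_UNIV)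
  have "FF s1 s2 g W = Z"
    unfolding vec_eq_iff
  proof (intro allI)
    fix \<theta> s
    show "FF s1 s2 g W $ \<theta> $ s = Z $ \<theta> $ s"
    proof (cases "s = s1")
      case True
      have "(\<Sum>s'\<in>-{s1}. W$\<theta>$s' * vv s1 s2 g W s') = (\<Sum>s'\<in>-{s1}. Z$\<theta>$s' * w$s')"
      proof (rule sum.cong)
        fix s' assume "s' \<in> -{s1}"
        then have "W$\<theta>$s' = Z$\<theta>$s'" by (simp add: W_def)
        then show "W$\<theta>$s' * vv s1 s2 g W s' = Z$\<theta>$s' * w$s'" by (simp add: vvW)
      qed simp
      then show ?thesis using True Wc cth[of \<theta>] inner_split[of \<theta>] by (simp add: FF_def)
    next
      case False
      then show ?thesis by (simp add: FF_def W_def)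
    qed
  qed
  then show "Z \<in> (\<Union>s1. \<Union>s2\<in>-{s1}. FF s1 s2 g ` {W. W$(g s2)$s1 = 0})"
    using W0 s21 by blast
qed

lemma negl_UN:
  assumes "finite I" "\<And>i. i \<in> I \<Longrightarrow> negligible (A i)"
  shows "negligible (\<Union>i\<in>I. A i)"
  using assms by (intro negligible_Union) auto

lemma bad_negl:
  assumes "CARD('s::finite) \<le> CARD('h::finite)"
  shows "negligible (badset :: (real^'s^'h) set)"
proof -
  obtain g :: "'s \<Rightarrow> 'h" where g: "inj g"
    using card_le_inj[of "UNIV::'s set" "UNIV::'h set"] assms by auto
  have "negligible (\<Union>s1. \<Union>s2\<in>-{s1}. FF s1 s2 g ` {W. W$(g s2)$s1 = 0})"
    apply (rule negl_UN, simp)+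
    apply (rule negligible_differentiable_image_negligible[OF order_refl hyp_negl])
    apply (rule differentiable_on_subset[OF FF_diff], simp)
    done
  then show ?thesis using bad_cover[OF g] negligible_subset by blast
qed

lemma argmin_unique_iff:
  fixes f :: "'h::finite \<Rightarrow> real"
  shows "argmin_unique f \<longleftrightarrow> (\<exists>\<theta>. \<forall>\<theta>'. \<theta>' \<noteq> \<theta> \<longrightarrow> f \<theta> < f \<theta>')"
proof
  assume "argmin_unique f"
  then obtain \<theta> where m: "\<forall>\<theta>'. f \<theta> \<le> f \<theta>'" and u: "\<And>t. \<forall>\<theta>'. f t \<le> f \<theta>' \<Longrightarrow> t = \<theta>"
    unfolding argmin_unique_def by blast
  have "f \<theta> < f \<theta>'" if "\<theta>' \<noteq> \<theta>" for \<theta>'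
  proof (rule ccontr)
    assume "\<not> f \<theta> < f \<theta>'"
    then have "\<forall>t. f \<theta>' \<le> f t" using m by (metis order.trans not_less)
    then show False using u that by blast
  qed
  then show "\<exists>\<theta>. \<forall>\<theta>'. \<theta>' \<noteq> \<theta> \<longrightarrow> f \<theta> < f \<theta>'" by blast
next
  assume "\<exists>\<theta>. \<forall>\<theta>'. \<theta>' \<noteq> \<theta> \<longrightarrow> f \<theta> < f \<theta>'"
  then obtain \<theta> where h: "\<forall>\<theta>'. \<theta>' \<noteq> \<theta> \<longrightarrow> f \<theta> < f \<theta>'" by blast
  have m: "\<forall>\<theta>'. f \<theta> \<le> f \<theta>'" using h by (metis order.refl less_imp_le)
  show "argmin_unique f" unfolding argmin_unique_def
  proof (rule ex1I[of _ \<theta>])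
    show "\<forall>\<theta>'. f \<theta> \<le> f \<theta>'" by fact
    fix t assume "\<forall>\<theta>'. f t \<le> f \<theta>'"
    then show "t = \<theta>" using h by (metis not_less)
  qed
qed

lemma notie_argmin:
  fixes f :: "'h::finite \<Rightarrow> real"
  assumes "\<forall>\<theta> \<theta>'. \<theta> \<noteq> \<theta>' \<longrightarrow> f \<theta> \<noteq> f \<theta>'"
  shows "argmin_unique f"
proof -
  have "Min (range f) \<in> range f" by simp
  then obtain \<theta> where t: "f \<theta> = Min (range f)" by (metis rangeE)
  have "f \<theta> \<le> f \<theta>'" for \<theta>' unfolding t by simp
  then have "\<forall>\<theta>'. \<theta>' \<noteq> \<theta> \<longrightarrow> f \<theta> < f \<theta>'" using assms by (metis order_le_less)
  then show ?thesis unfolding argmin_unique_iff by blast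
qed

lemma tie_negl:
  fixes x :: "'s::finite \<Rightarrow> real"
  assumes "\<forall>s. x s > 0"
  shows "negligible {Z::real^'s^'h::finite. \<exists>\<theta> \<theta>'. \<theta> \<noteq> \<theta>' \<and> agg_cost x Z \<theta> = agg_cost x Z \<theta>'}"
proof -
  define a where "a \<theta> \<theta>' = ((\<chi> i j. (if i = \<theta> then x j else 0) - (if i = \<theta>' then x j else 0)) :: real^'s^'h)" for \<theta> \<theta>'
  have ai: "a \<theta> \<theta>' \<bullet> Z = agg_cost x Z \<theta> - agg_cost x Z \<theta>'" for \<theta> \<theta>' Z
  proof -
    have c: "(a \<theta> \<theta>')$i \<bullet> Z$i = (if i = \<theta> then agg_cost x Z \<theta> else 0) - (if i = \<theta>' then agg_cost x Z \<theta>' else 0)" for i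
      by (cases "i = \<theta>"; cases "i = \<theta>'") (auto simp: a_def inner_vec_def agg_cost_def sum_subtractf left_diff_distrib sum_negf)
    have "a \<theta> \<theta>' \<bullet> Z = (\<Sum>i\<in>UNIV. (a \<theta> \<theta>')$i \<bullet> Z$i)" by (rule inner_vec_def)
    also have "\<dots> = agg_cost x Z \<theta> - agg_cost x Z \<theta>'" unfolding c by (simp add: sum_subtractf)
    finally show ?thesis .
  qed
  have an: "a \<theta> \<theta>' \<noteq> 0" if "\<theta> \<noteq> \<theta>'" for \<theta> \<theta>'
  proof
    assume "a \<theta> \<theta>' = 0"
    then have e1: "(a \<theta> \<theta>')$\<theta>$s0 = 0" for s0 by simp
    have e2: "(a \<theta> \<theta>')$\<theta>$s0 = x s0" for s0 using that by (simp add: a_def)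
    have "x undefined = 0" using e1 e2 by simp
    moreover have "x undefined > 0" using assms by blast
    ultimately show False by simp
  qed
  have eq: "{Z::real^'s^'h. \<exists>\<theta> \<theta>'. \<theta> \<noteq> \<theta>' \<and> agg_cost x Z \<theta> = agg_cost x Z \<theta>'}
      = (\<Union>\<theta>. \<Union>\<theta>'\<in>-{\<theta>}. {Z. a \<theta> \<theta>' \<bullet> Z = 0})"
  proof (intro set_eqI iffI)
    fix Z assume "Z \<in> {Z::real^'s^'h. \<exists>\<theta> \<theta>'. \<theta> \<noteq> \<theta>' \<and> agg_cost x Z \<theta> = agg_cost x Z \<theta>'}"
    then obtain \<theta> \<theta>' where "\<theta> \<noteq> \<theta>'" "agg_cost x Z \<theta> = agg_cost x Z \<theta>'" by blast
    then have "\<theta>' \<in> -{\<theta>}" "Z \<in> {Z. a \<theta> \<theta>' \<bullet> Z = 0}" by (auto simp: ai)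
    then show "Z \<in> (\<Union>\<theta>. \<Union>\<theta>'\<in>-{\<theta>}. {Z. a \<theta> \<theta>' \<bullet> Z = 0})" by blast
  next
    fix Z assume "Z \<in> (\<Union>\<theta>. \<Union>\<theta>'\<in>-{\<theta>}. {Z. a \<theta> \<theta>' \<bullet> Z = 0})"
    then obtain \<theta> \<theta>' where "\<theta>' \<in> -{\<theta>}" "a \<theta> \<theta>' \<bullet> Z = 0" by blast
    then have "\<theta> \<noteq> \<theta>'" "agg_cost x Z \<theta> = agg_cost x Z \<theta>'" by (auto simp: ai)
    then show "Z \<in> {Z::real^'s^'h. \<exists>\<theta> \<theta>'. \<theta> \<noteq> \<theta>' \<and> agg_cost x Z \<theta> = agg_cost x Z \<theta>'}" by blast
  qed
  show ?thesis unfolding eq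
    apply (rule negl_UN, simp)+
    apply (rule negligible_hyperplane)
    using an by auto
qed

lemma open_U:
  fixes x :: "'s::finite \<Rightarrow> real"
  shows "open {Z::real^'s^'h::finite. argmin_unique (agg_cost x Z)}"
proof -
  have eq: "{Z::real^'s^'h. argmin_unique (agg_cost x Z)} =
     (\<Union>\<theta>. \<Inter>\<theta>'\<in>-{\<theta>}. {Z. agg_cost x Z \<theta> < agg_cost x Z \<theta>'})"
    by (auto simp: argmin_unique_iff)
  have c: "continuous_on UNIV (\<lambda>Z::real^'s^'h. agg_cost x Z \<theta>)" for \<theta>
    unfolding agg_cost_def by (intro continuous_intros)
  show ?thesis unfolding eq
    by (intro open_UN ballI open_INT finite_class.finite_UNIV open_Collect_less c) simp
qed

lemma closed_bad: "closed (badset :: (real^'s::finite^'h::finite) set)"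
proof -
  define K where "K = {v::real^'s. norm v = 1 \<and> sum (($) v) UNIV = 0}"
  define T where "T = {p::((real^'s) \<times> (real^'s^'h)). \<forall>\<theta> \<theta>'. (snd p)$\<theta> \<bullet> fst p = (snd p)$\<theta>' \<bullet> fst p}"
  have "closed K" unfolding K_def
    by (intro closed_Collect_conj closed_Collect_eq continuous_intros)
  moreover have "bounded K" unfolding K_def bounded_iff by auto
  ultimately have cK: "compact K" by (simp add: compact_eq_bounded_closed)
  have cT: "closed T" unfolding T_def
    by (intro closed_Collect_all closed_Collect_eq continuous_intros)
  have "badset = {y. \<exists>v. v \<in> K \<and> (v, y) \<in> T}"
  proof (intro set_eqI iffI)
    fix Z :: "real^'s^'h" assume "Z \<in> badset"
    then obtain v where v0: "v \<noteq> 0" and vs: "sum (($) v) UNIV = 0"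
      and ve: "\<forall>\<theta> \<theta>'. Z$\<theta> \<bullet> v = Z$\<theta>' \<bullet> v" by (auto simp: badset_def)
    define w where "w = (1 / norm v) *\<^sub>R v"
    have "w \<in> K" using v0 vs by (simp add: K_def w_def sum_divide_distrib[symmetric])
    moreover have "(w, Z) \<in> T" using ve by (simp add: T_def w_def)
    ultimately show "Z \<in> {y. \<exists>v. v \<in> K \<and> (v, y) \<in> T}" by blast
  next
    fix Z :: "real^'s^'h" assume "Z \<in> {y. \<exists>v. v \<in> K \<and> (v, y) \<in> T}"
    then obtain v where "v \<in> K" "(v, Z) \<in> T" by blast
    then show "Z \<in> badset" unfolding badset_def K_def T_def by (auto intro!: exI[of _ v])
  qed
  then show ?thesis using closed_compact_projection[OF cK cT] by simp
qed

theorem theorem3: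
  fixes M :: "'w measure"
    and D :: "'w \<Rightarrow> real^'s::finite^'h::finite"
    and x :: "'s \<Rightarrow> real"
  assumes "prob_space M"
    and "CARD('s) \<le> CARD('h)"
    and "D \<in> borel_measurable M"
    and "absolutely_continuous lborel (distr M lborel D)"
    and "AE \<omega> in M. \<forall>\<theta> s. D \<omega> $ \<theta> $ s \<ge> 0"
    and "\<forall>s. x s > 0"
    and "(\<Sum>s\<in>UNIV. x s) = 1"
  shows "measure M {\<omega> \<in> space M.
            argmin_unique (agg_cost x (D \<omega>)) \<and>
            rank (Cmat (D \<omega>) (argmin_of (agg_cost x (D \<omega>)))) = CARD('s)} = 1"
proof -
  interpret P: prob_space M by fact
  define G where "G = {Z::real^'s^'h. argmin_unique (agg_cost x Z)} \<inter> - badset"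
  have "open G" unfolding G_def using open_U closed_bad by (intro open_Int) (auto simp: open_Compl)
  then have Gb: "G \<in> sets borel" by simp
  have ev: "{\<omega> \<in> space M. argmin_unique (agg_cost x (D \<omega>)) \<and>
            rank (Cmat (D \<omega>) (argmin_of (agg_cost x (D \<omega>)))) = CARD('s)} = D -` G \<inter> space M"
    by (auto simp: G_def rank_Cmat)
  have Dm: "D \<in> measurable M lborel" using assms(3) by simp
  have sub: "-G \<subseteq> {Z::real^'s^'h. \<exists>\<theta> \<theta>'. \<theta> \<noteq> \<theta>' \<and> agg_cost x Z \<theta> = agg_cost x Z \<theta>'} \<union> badset"
    unfolding G_def using notie_argmin by blast
  have "negligible (-G)"
    by (rule negligible_subset[OF _ sub]) (simp add: tie_negl[OF assms(6)] bad_negl[OF assms(2)])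
  then have "-G \<in> null_sets lebesgue" by (simp add: negligible_iff_null_sets)
  moreover have cGb: "-G \<in> sets lborel" using Gb by simp
  ultimately have "-G \<in> null_sets lborel" using null_sets_completion_iff by blast
  then have "-G \<in> null_sets (distr M lborel D)" using assms(4) by (auto simp: absolutely_continuous_def)
  then have "measure (distr M lborel D) (-G) = 0" by (simp add: measure_eq_0_null_sets)
  then have m0: "measure M (D -` (-G) \<inter> space M) = 0" using measure_distr[OF Dm cGb] by simp
  have Ev: "D -` G \<inter> space M \<in> P.events" using Dm Gb by (simp add: measurable_sets)
  have "space M - (D -` G \<inter> space M) = D -` (-G) \<inter> space M" by auto
  then have "P.prob (D -` G \<inter> space M) = 1 - P.prob (D -` (-G) \<inter> space M)"
    using P.prob_compl[OF Ev] by simp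
  then show ?thesis unfolding ev using m0 by simp
qed

end
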